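(* Let $n,d,e,f$ be positive integers with $d\mid n$ and $\gcd(e,n/d)=1$. Then $I_{n,de}=I_{n,d}$ and $I_{n,f}=I_{n,\gcd(n,f)}$. Moreover $$I_{n,d}=\sum_{k=0}^{\lfloor d/2\rfloor}\frac{d!\,(n/d)^k\,\bigl(2-(n/d \bmod 2)\bigr)^{d-2k}}{2^k k!\,(d-2k)!},$$ and in particular $I_n=\sum_{k=0}^{\lfloor n/2\rfloor}\frac{n!}{2^k k!(n-2k)!}$.
   Context: For positive integers $n,d$ and an $n$-cycle $\zeta\in S_n$, $I_{n,d}$ is the number of $\tau\in S_n$ with $\tau^2=1$ and $\tau\zeta^d=\zeta^d\tau$ (independent of the choice of $\zeta$), and $I_n:=I_{n,n}$. Here $n\bmod 2\in\{0,1\}$ is the remainder of $n$ upon division by $2$. *)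

theory Defs
  imports Complex_Main "HOL-Combinatorics.Permutations"
begin

definition std_cycle :: "nat \<Rightarrow> nat \<Rightarrow> nat" where
  "std_cycle n = (\<lambda>i. if i < n then Suc i mod n else i)"

definition I_nd :: "nat \<Rightarrow> nat \<Rightarrow> nat" where
  "I_nd n d = card {\<tau>. \<tau> permutes {..<n} \<and> \<tau> \<circ> \<tau> = id \<and>
                        \<tau> \<circ> (std_cycle n ^^ d) = (std_cycle n ^^ d) \<circ> \<tau>}"

definition I_n :: "nat \<Rightarrow> nat" where
  "I_n n = I_nd n n"

end

theory Submission
  imports Defs
begin


definition Hs :: "nat \<Rightarrow> 'a set \<Rightarrow> (('a \<Rightarrow> 'a) \<times> ('a \<Rightarrow> nat)) set" where
  "Hs m A = {(p,s). p \<in> A \<rightarrow>\<^sub>E A \<and> s \<in> A \<rightarrow>\<^sub>E {..<m} \<and>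
     (\<forall>r\<in>A. p (p r) = r \<and> (s (p r) + s r) mod m = 0)}"

definition Cs :: "nat \<Rightarrow> nat set" where
  "Cs m = {t. t < m \<and> (t + t) mod m = 0}"

lemma H1_bij:
  assumes "a \<in> A"
  shows "bij_betw (\<lambda>(p,s). ((restrict p (A-{a}), restrict s (A-{a})), s a))
     {x\<in>Hs m A. fst x a = a} (Hs m (A-{a}) \<times> Cs m)"
proof (rule bij_betw_byWitness[where f' = "\<lambda>((p,s),t). (p(a:=a), s(a:=t))"])
  show "\<forall>x\<in>{x\<in>Hs m A. fst x a = a}. (\<lambda>((p,s),t). (p(a:=a), s(a:=t))) ((\<lambda>(p,s). ((restrict p (A-{a}), restrict s (A-{a})), s a)) x) = x"
    by (auto simp: Hs_def fun_eq_iff PiE_iff extensional_def)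
  show "\<forall>x\<in>Hs m (A-{a}) \<times> Cs m. (\<lambda>(p,s). ((restrict p (A-{a}), restrict s (A-{a})), s a)) ((\<lambda>((p,s),t). (p(a:=a), s(a:=t))) x) = x"
    by (auto simp: Hs_def fun_eq_iff PiE_iff extensional_def)
  show "(\<lambda>(p,s). ((restrict p (A-{a}), restrict s (A-{a})), s a)) ` {x\<in>Hs m A. fst x a = a} \<subseteq> Hs m (A-{a}) \<times> Cs m"
    using assms by (auto simp: Hs_def Cs_def PiE_iff extensional_def) (metis)+
  show "(\<lambda>((p,s),t). (p(a:=a), s(a:=t))) ` (Hs m (A-{a}) \<times> Cs m) \<subseteq> {x\<in>Hs m A. fst x a = a}"
    using assms by (auto simp: Hs_def Cs_def PiE_iff extensional_def)
qed

lemma H2_bij: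
  assumes "a \<in> A" "b \<in> A" "b \<noteq> a" "m > 0"
  shows "bij_betw (\<lambda>(p,s). ((restrict p (A-{a,b}), restrict s (A-{a,b})), s a))
     {x\<in>Hs m A. fst x a = b} (Hs m (A-{a,b}) \<times> {..<m})"
proof (rule bij_betw_byWitness[where f' = "\<lambda>((p,s),t). (p(a:=b, b:=a), s(a:=t, b:=(m - t) mod m))"])
  show "\<forall>x\<in>{x\<in>Hs m A. fst x a = b}. (\<lambda>((p,s),t). (p(a:=b, b:=a), s(a:=t, b:=(m - t) mod m))) ((\<lambda>(p,s). ((restrict p (A-{a,b}), restrict s (A-{a,b})), s a)) x) = x"
  proof
    fix x assume x: "x \<in> {x\<in>Hs m A. fst x a = b}"
    obtain p s where ps: "x = (p,s)" by (cases x)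
    have pA: "p \<in> A \<rightarrow>\<^sub>E A" and sA: "s \<in> A \<rightarrow>\<^sub>E {..<m}" and inv: "\<forall>r\<in>A. p (p r) = r \<and> (s (p r) + s r) mod m = 0"
      and pa: "p a = b" using x ps by (auto simp: Hs_def)
    have pb: "p b = a" using inv pa assms by metis
    have sb: "s b = (m - s a) mod m"
    proof -
      have h0: "(s b + s a) mod m = 0" using inv pa assms by metis
      have h1: "s a < m" "s b < m" using sA assms by auto
      show ?thesis
      proof (cases "s a = 0")
        case True then show ?thesis using h0 h1 by simp
      next
        case False
        obtain q where q: "s b + s a = m*q" using h0 by (metis dvd_def mod_0_imp_dvd)
        have "m*q < m*2" using q h1 by linarith
        then have "q < 2" by simp
        moreover have "q \<noteq> 0" using q False by (cases q) auto
        ultimately have "q = 1" by linarith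
        then have "s b + s a = m" using q by simp
        then show ?thesis using False by simp
      qed
    qed
    show "(\<lambda>((p,s),t). (p(a:=b, b:=a), s(a:=t, b:=(m - t) mod m))) ((\<lambda>(p,s). ((restrict p (A-{a,b}), restrict s (A-{a,b})), s a)) x) = x"
      using pA sA pa pb sb assms unfolding ps by (auto simp: fun_eq_iff PiE_iff extensional_def)
  qed
  show "\<forall>x\<in>Hs m (A-{a,b}) \<times> {..<m}. (\<lambda>(p,s). ((restrict p (A-{a,b}), restrict s (A-{a,b})), s a)) ((\<lambda>((p,s),t). (p(a:=b, b:=a), s(a:=t, b:=(m - t) mod m))) x) = x"
    using assms by (auto simp: Hs_def fun_eq_iff PiE_iff extensional_def)
  show "(\<lambda>(p,s). ((restrict p (A-{a,b}), restrict s (A-{a,b})), s a)) ` {x\<in>Hs m A. fst x a = b} \<subseteq> Hs m (A-{a,b}) \<times> {..<m}"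
  proof
    fix y assume "y \<in> (\<lambda>(p,s). ((restrict p (A-{a,b}), restrict s (A-{a,b})), s a)) ` {x\<in>Hs m A. fst x a = b}"
    then obtain p s where ps: "(p,s) \<in> Hs m A" "p a = b" and y: "y = ((restrict p (A-{a,b}), restrict s (A-{a,b})), s a)" by auto
    have pA: "p \<in> A \<rightarrow>\<^sub>E A" and sA: "s \<in> A \<rightarrow>\<^sub>E {..<m}" and inv: "\<forall>r\<in>A. p (p r) = r \<and> (s (p r) + s r) mod m = 0"
      using ps by (auto simp: Hs_def)
    have pa: "b = p a" using ps by simp
    have pb: "p b = a" using inv pa assms by metis
    have "restrict p (A - {a, b}) \<in> A - {a, b} \<rightarrow>\<^sub>E A - {a, b}"
    proof
      fix r assume r: "r \<in> A - {a,b}"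
      have rr: "p (p r) = r" using inv r by auto
      have "p r \<in> A" using pA r by auto
      moreover have "p r \<noteq> a" using rr r pa by auto
      moreover have "p r \<noteq> b" using rr r pb by auto
      ultimately show "restrict p (A - {a, b}) r \<in> A - {a,b}" using r by auto
    qed auto
    moreover have "restrict s (A - {a, b}) \<in> A - {a, b} \<rightarrow>\<^sub>E {..<m}" using sA by auto
    moreover have "\<forall>r\<in>A - {a, b}. restrict p (A - {a, b}) (restrict p (A - {a, b}) r) = r \<and>
             (restrict s (A - {a, b}) (restrict p (A - {a, b}) r) + restrict s (A - {a, b}) r) mod m = 0"
    proof
      fix r assume r: "r \<in> A - {a,b}"
      have rr: "p (p r) = r" using inv r by auto
      have "p r \<noteq> a" using rr r pa by auto
      moreover have "p r \<noteq> b" using rr r pb by auto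
      ultimately have "p r \<in> A - {a,b}" using r pA by auto
      then show "restrict p (A - {a, b}) (restrict p (A - {a, b}) r) = r \<and>
             (restrict s (A - {a, b}) (restrict p (A - {a, b}) r) + restrict s (A - {a, b}) r) mod m = 0"
        using r inv by auto
    qed
    moreover have "s a < m" using sA assms by auto
    ultimately show "y \<in> Hs m (A-{a,b}) \<times> {..<m}" by (simp add: y Hs_def)
  qed
  show "(\<lambda>((p,s),t). (p(a:=b, b:=a), s(a:=t, b:=(m - t) mod m))) ` (Hs m (A-{a,b}) \<times> {..<m}) \<subseteq> {x\<in>Hs m A. fst x a = b}"
  proof
    fix y assume "y \<in> (\<lambda>((p,s),t). (p(a:=b, b:=a), s(a:=t, b:=(m - t) mod m))) ` (Hs m (A-{a,b}) \<times> {..<m})"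
    then obtain p s t where ps: "(p,s) \<in> Hs m (A-{a,b})" and t: "t < m"
      and y: "y = (p(a:=b, b:=a), s(a:=t, b:=(m - t) mod m))" by auto
    have pA: "p \<in> A-{a,b} \<rightarrow>\<^sub>E A-{a,b}" and sA: "s \<in> A-{a,b} \<rightarrow>\<^sub>E {..<m}"
      and inv: "\<forall>r\<in>A-{a,b}. p (p r) = r \<and> (s (p r) + s r) mod m = 0"
      using ps by (auto simp: Hs_def)
    have 1: "p(a:=b, b:=a) \<in> A \<rightarrow>\<^sub>E A"
    proof (rule PiE_I)
      fix x assume "x \<in> A" then show "(p(a:=b, b:=a)) x \<in> A" using pA assms by auto
    next
      fix x assume "x \<notin> A" then show "(p(a:=b, b:=a)) x = undefined" using pA assms by auto
    qed
    have 2: "s(a:=t, b:=(m - t) mod m) \<in> A \<rightarrow>\<^sub>E {..<m}"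
    proof (rule PiE_I)
      fix x assume "x \<in> A" then show "(s(a:=t, b:=(m - t) mod m)) x \<in> {..<m}" using sA assms t by auto
    next
      fix x assume "x \<notin> A" then show "(s(a:=t, b:=(m - t) mod m)) x = undefined" using sA assms by auto
    qed
    have 3: "(p(a:=b, b:=a)) ((p(a:=b, b:=a)) r) = r \<and> ((s(a:=t, b:=(m - t) mod m)) ((p(a:=b, b:=a)) r) + (s(a:=t, b:=(m - t) mod m)) r) mod m = 0"
      if r: "r \<in> A" for r
    proof (cases "r = a \<or> r = b")
      case True
      have "((m - t) mod m + t) mod m = 0"
        using t by (cases "t = 0") auto
      moreover have "(t + (m - t) mod m) mod m = 0"
        using t by (cases "t = 0") auto
      ultimately show ?thesis using True assms by auto
    next
      case False
      then have rA: "r \<in> A - {a,b}" using r by auto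
      then have "p r \<in> A - {a,b}" using pA by auto
      then show ?thesis using rA inv by auto
    qed
    show "y \<in> {x\<in>Hs m A. fst x a = b}" unfolding y Hs_def using 1 2 3 assms by auto
  qed
qed



lemma Hs_finite: "finite A \<Longrightarrow> finite (Hs m A)"
  by (rule finite_subset[of _ "(A \<rightarrow>\<^sub>E A) \<times> (A \<rightarrow>\<^sub>E {..<m})"])
     (auto simp: Hs_def intro!: finite_PiE)

lemma Hs_rec:
  assumes A: "finite A" and a: "a \<in> A" and m: "m > 0"
  shows "card (Hs m A) = card (Cs m) * card (Hs m (A-{a})) + (\<Sum>b\<in>A-{a}. card (Hs m (A-{a,b})) * m)"
proof -
  have split: "Hs m A = {x\<in>Hs m A. fst x a = a} \<union> (\<Union>b\<in>A-{a}. {x\<in>Hs m A. fst x a = b})"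
    using a by (auto simp: Hs_def PiE_iff)
  have fin: "finite (Hs m A)" using A by (rule Hs_finite)
  have "card (Hs m A) = card {x\<in>Hs m A. fst x a = a} + card (\<Union>b\<in>A-{a}. {x\<in>Hs m A. fst x a = b})"
    by (subst split, rule card_Un_disjoint) (use fin in \<open>auto intro: finite_subset[OF _ fin]\<close>)
  also have "card (\<Union>b\<in>A-{a}. {x\<in>Hs m A. fst x a = b}) = (\<Sum>b\<in>A-{a}. card {x\<in>Hs m A. fst x a = b})"
    by (rule card_UN_disjoint) (use fin A in auto)
  also have "card {x\<in>Hs m A. fst x a = a} = card (Hs m (A-{a}) \<times> Cs m)"
    by (rule bij_betw_same_card, rule H1_bij[OF a])
  also have "(\<Sum>b\<in>A-{a}. card {x\<in>Hs m A. fst x a = b}) = (\<Sum>b\<in>A-{a}. card (Hs m (A-{a,b}) \<times> {..<m}))"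
  proof (rule sum.cong)
    fix b assume "b \<in> A - {a}"
    then show "card {x\<in>Hs m A. fst x a = b} = card (Hs m (A-{a,b}) \<times> {..<m})"
      using a m by (intro bij_betw_same_card[OF H2_bij]) auto
  qed simp
  finally show ?thesis by (simp add: card_cartesian_product mult.commute)
qed

fun T :: "nat \<Rightarrow> nat \<Rightarrow> nat \<Rightarrow> nat" where
  "T c m 0 = 1"
| "T c m (Suc 0) = c"
| "T c m (Suc (Suc N)) = c * T c m (Suc N) + Suc N * m * T c m N"

lemma T_Suc: "T c m (Suc K) = c * T c m K + K * m * T c m (K - 1)"
  by (cases K) auto

lemma Hs_card: "finite A \<Longrightarrow> m > 0 \<Longrightarrow> card (Hs m A) = T (card (Cs m)) m (card A)"
proof (induction "card A" arbitrary: A rule: less_induct)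
  case less
  show ?case
  proof (cases "A = {}")
    case True
    then show ?thesis by (simp add: Hs_def)
  next
    case False
    then obtain a where a: "a \<in> A" by auto
    then obtain K where K: "card A = Suc K" using less.prems by (cases "card A") auto
    have c1: "card (A - {a}) = K" using K a less.prems by simp
    have IH1: "card (Hs m (A-{a})) = T (card (Cs m)) m K"
      using less.hyps[of "A-{a}"] c1 K less.prems by simp
    have IH2: "card (Hs m (A-{a,b})) = T (card (Cs m)) m (K - 1)" if b: "b \<in> A - {a}" for b
    proof -
      have "A - {a,b} = (A - {a}) - {b}" by auto
      then have "card (A - {a,b}) = K - 1" using c1 b less.prems by simp
      then show ?thesis using less.hyps[of "A-{a,b}"] K less.prems by simp
    qed
    have "card (Hs m A) = card (Cs m) * T (card (Cs m)) m K + (\<Sum>b\<in>A-{a}. T (card (Cs m)) m (K - 1) * m)"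
      using Hs_rec[OF less.prems(1) a less.prems(2)] IH1 IH2 by simp
    also have "\<dots> = T (card (Cs m)) m (card A)"
      using c1 K by (simp add: T_Suc mult.commute mult.left_commute)
    finally show ?thesis .
  qed
qed

lemma Cs_card: "m > 0 \<Longrightarrow> card (Cs m) = 2 - m mod 2"
proof -
  assume m: "m > 0"
  have key: "t \<in> Cs m \<longleftrightarrow> t = 0 \<or> (even m \<and> t = m div 2)" for t
  proof
    assume "t \<in> Cs m"
    then have t: "t < m" "(t + t) mod m = 0" by (auto simp: Cs_def)
    show "t = 0 \<or> (even m \<and> t = m div 2)"
    proof (cases "t = 0")
      case False
      obtain q where q: "t + t = m * q" using t(2) by (metis dvd_def mod_0_imp_dvd)
      have "m*q < m*2" using q t by linarith
      then have "q < 2" by simp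
      moreover have "q \<noteq> 0" using q False by (cases q) auto
      ultimately have "q = 1" by linarith
      then have "t + t = m" using q by simp
      then show ?thesis by presburger
    qed simp
  next
    assume "t = 0 \<or> (even m \<and> t = m div 2)"
    then show "t \<in> Cs m" using m by (auto simp: Cs_def mult_2 elim!: evenE)
  qed
  show ?thesis
  proof (cases "even m")
    case True
    then have "Cs m = {0, m div 2}" using key by auto
    moreover have "m div 2 \<noteq> 0" using True m by (auto elim!: evenE)
    ultimately show ?thesis using True by simp
  next
    case False
    then have "Cs m = {0}" using key by auto
    then show ?thesis using False by (simp add: odd_iff_mod_2_eq_one)
  qed
qed



definition u :: "real \<Rightarrow> real \<Rightarrow> nat \<Rightarrow> nat \<Rightarrow> real" where
  "u x y d k = (if 2*k \<le> d then real (fact d) * x ^ k * y ^ (d - 2*k)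
      / (2 ^ k * real (fact k) * real (fact (d - 2*k))) else 0)"

lemma u_zero: "u x y (Suc d) 0 = y * u x y d 0"
proof -
  have "real (fact n) \<noteq> 0" for n :: nat by simp
  then show ?thesis unfolding u_def by (simp del: fact_Suc of_nat_fact)
qed

lemma alg1:
  fixes F K J W P Q x y A B S :: real
  assumes "F > 0" "K > 0" "J > 0" "W > 0" "A > 0" "B > 0"
  shows "((2*A+B)*S*F) * (x*P) * (y*Q) / ((2*W) * (A*K) * (B*J))
    = y * ((S*F) * (x*P) * Q / ((2*W) * (A*K) * J))
      + S * x * (F * P * (y*Q) / (W * K * (B*J)))"
  using assms by (simp add: field_simps)

lemma u_rec: "u x y (Suc (Suc d)) (Suc k) = y * u x y (Suc d) (Suc k) + real (Suc d) * x * u x y d k"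
proof (cases "2*k+2 \<le> Suc d")
  case True
  have "\<exists>j. d = 2*k + 1 + j" using True by presburger
  then obtain j where d: "d = 2*k + 1 + j" by blast
  define A where "A = real (Suc k)"
  define B where "B = real (Suc j)"
  define S where "S = real (Suc d)"
  define F where "F = real (fact d)"
  define K where "K = real (fact k)"
  define J where "J = real (fact j)"
  define W where "W = (2::real) ^ k"
  define P where "P = x ^ k"
  define Q where "Q = y ^ j"
  have e1: "Suc (Suc d) - 2 * Suc k = Suc j" "Suc d - 2 * Suc k = j" "d - 2*k = Suc j" using d by auto
  have c1: "2 * Suc k \<le> Suc (Suc d)" "2 * Suc k \<le> Suc d" "2*k \<le> d" using d by auto
  have f2: "real (fact (Suc (Suc d))) = (2*A+B)*S*F"
    unfolding A_def B_def S_def F_def by (simp add: d algebra_simps)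
  have f1: "real (fact (Suc d)) = S*F" unfolding S_def F_def by (simp add: algebra_simps)
  have fk: "real (fact (Suc k)) = A*K" unfolding A_def K_def by (simp add: algebra_simps)
  have fj: "real (fact (Suc j)) = B*J" unfolding B_def J_def by (simp add: algebra_simps)
  have u1: "u x y (Suc(Suc d)) (Suc k) = ((2*A+B)*S*F) * (x*P) * (y*Q) / ((2*W) * (A*K) * (B*J))"
    unfolding u_def using c1 by (simp only: if_True e1 f2 fk fj power_Suc P_def Q_def W_def)
  have u2: "u x y (Suc d) (Suc k) = (S*F) * (x*P) * Q / ((2*W) * (A*K) * J)"
    unfolding u_def using c1 by (simp only: if_True e1 f1 fk power_Suc P_def Q_def W_def J_def)
  have u3: "u x y d k = F * P * (y*Q) / (W * K * (B*J))"
    unfolding u_def using c1 by (simp only: if_True e1 fj power_Suc P_def Q_def W_def K_def F_def)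
  have pos: "F > 0" "K > 0" "J > 0" "W > 0" "A > 0" "B > 0"
    unfolding F_def K_def J_def W_def A_def B_def by auto
  show ?thesis unfolding u1 u2 u3 S_def[symmetric] by (rule alg1[OF pos])
next
  case False
  show ?thesis
  proof (cases "d = 2*k")
    case True
    define K where "K = real (fact k)"
    define F where "F = real (fact d)"
    define A where "A = real (Suc k)"
    have fk: "real (fact (Suc k)) = A * K" unfolding A_def K_def by (simp add: algebra_simps)
    have f2: "real (fact (Suc (Suc d))) = (2*A) * real (Suc d) * F" unfolding A_def F_def
      by (simp add: True algebra_simps)
    have e: "Suc (Suc d) - 2 * Suc k = 0" "d - 2*k = 0" using True by auto
    have c: "2 * Suc k \<le> Suc (Suc d)" "\<not> 2 * Suc k \<le> Suc d" "2*k \<le> d" using True by auto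
    have pos: "K > 0" "F > 0" "A > 0" unfolding K_def F_def A_def by auto
    show ?thesis unfolding u_def using c
      apply (simp only: if_True if_False e fk f2 power_Suc power_0 fact_0 K_def[symmetric] F_def[symmetric])
      using pos apply (simp add: field_simps)
      done
  next
    case False
    then show ?thesis using \<open>\<not> 2*k+2 \<le> Suc d\<close> by (simp add: u_def)
  qed
qed



lemma u_sum: "(\<Sum>k=0..d. u (real m) (real c) d k) = real (T c m d)"
proof (induction d rule: less_induct)
  case (less d)
  show ?case
  proof (cases d)
    case 0 then show ?thesis by (simp add: u_def)
  next
    case (Suc d1)
    show ?thesis
    proof (cases d1)
      case 0 then show ?thesis using Suc by (simp add: u_def)
    next
      case (Suc d')
      let ?x = "real m" and ?y = "real c"
      have dd: "d = Suc (Suc d')" using Suc \<open>d = Suc d1\<close> by simp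
      have z1: "u ?x ?y (Suc d') (Suc (Suc d')) = 0" by (simp add: u_def)
      have z2: "u ?x ?y d' (Suc d') = 0" by (simp add: u_def)
      have "(\<Sum>k=0..Suc (Suc d'). u ?x ?y (Suc (Suc d')) k)
          = u ?x ?y (Suc (Suc d')) 0 + (\<Sum>k=0..Suc d'. u ?x ?y (Suc (Suc d')) (Suc k))"
        using sum.atLeast0_atMost_Suc_shift[of "u ?x ?y (Suc (Suc d'))" "Suc d'"] by (simp add: o_def)
      also have "\<dots> = ?y * u ?x ?y (Suc d') 0 + (\<Sum>k=0..Suc d'. ?y * u ?x ?y (Suc d') (Suc k) + real (Suc d') * ?x * u ?x ?y d' k)"
        by (simp only: u_zero u_rec)
      also have "\<dots> = ?y * (u ?x ?y (Suc d') 0 + (\<Sum>k=0..Suc d'. u ?x ?y (Suc d') (Suc k)))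
          + real (Suc d') * ?x * (\<Sum>k=0..Suc d'. u ?x ?y d' k)"
        by (simp add: sum.distrib sum_distrib_left algebra_simps)
      also have "u ?x ?y (Suc d') 0 + (\<Sum>k=0..Suc d'. u ?x ?y (Suc d') (Suc k)) = (\<Sum>k=0..Suc (Suc d'). u ?x ?y (Suc d') k)"
        using sum.atLeast0_atMost_Suc_shift[of "u ?x ?y (Suc d')" "Suc d'"] by (simp add: o_def)
      also have "\<dots> = (\<Sum>k=0..Suc d'. u ?x ?y (Suc d') k)" using z1 by simp
      also have "(\<Sum>k=0..Suc d'. u ?x ?y d' k) = (\<Sum>k=0..d'. u ?x ?y d' k)" using z2 by simp
      finally have "(\<Sum>k=0..d. u ?x ?y d k) = ?y * real (T c m (Suc d')) + real (Suc d') * ?x * real (T c m d')"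
        using less.IH[of "Suc d'"] less.IH[of d'] dd by simp
      then show ?thesis using dd by (simp add: algebra_simps)
    qed
  qed
qed

lemma T_closed: "real (T c m d) = (\<Sum>k = 0..d div 2. real (fact d) * real m ^ k * real c ^ (d - 2 * k)
              / (2 ^ k * real (fact k) * real (fact (d - 2 * k))))"
proof -
  have "(\<Sum>k = 0..d div 2. real (fact d) * real m ^ k * real c ^ (d - 2 * k)
              / (2 ^ k * real (fact k) * real (fact (d - 2 * k)))) = (\<Sum>k = 0..d div 2. u (real m) (real c) d k)"
    by (rule sum.cong) (auto simp: u_def)
  also have "\<dots> = (\<Sum>k = 0..d. u (real m) (real c) d k)"
    by (rule sum.mono_neutral_left) (auto simp: u_def)
  finally show ?thesis using u_sum by simp
qed



lemma cyc_pow: "n > 0 \<Longrightarrow> std_cycle n ^^ j = (\<lambda>i. if i < n then (i + j) mod n else i)"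
proof (induction j)
  case 0 then show ?case by (auto simp: fun_eq_iff)
next
  case (Suc j)
  then show ?case by (auto simp: fun_eq_iff std_cycle_def mod_Suc_eq)
qed

lemma AR:
  fixes d m x j :: nat
  assumes "d > 0"
  shows "(x + d*j) mod (d*m) = x mod d + d*((x div d + j) mod m)"
  using assms by (simp add: mod_mult2_eq ac_simps)

lemma small_bound:
  fixes d m x y :: nat
  assumes "x < d" "y < m"
  shows "x + d*y < d*m"
proof -
  have "x + d*y < d + d*y" using assms by simp
  also have "\<dots> = d * Suc y" by simp
  also have "\<dots> \<le> d*m" using assms by (intro mult_le_mono2) simp
  finally show ?thesis .
qed

lemma divmod_small:
  fixes d x y :: nat
  assumes "x < d"
  shows "(x + d*y) mod d = x" "(x + d*y) div d = y"
  using assms by auto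

lemma comm_pow: "t \<circ> g = g \<circ> t \<Longrightarrow> t \<circ> g ^^ k = g ^^ k \<circ> t"
proof (induction k)
  case 0 then show ?case by simp
next
  case (Suc k)
  have "t \<circ> g ^^ Suc k = (t \<circ> g) \<circ> g ^^ k" by (simp add: o_assoc)
  also have "\<dots> = g \<circ> (t \<circ> g ^^ k)" by (simp only: Suc.prems o_assoc)
  also have "\<dots> = g \<circ> (g ^^ k \<circ> t)" by (simp only: Suc.IH[OF Suc.prems])
  also have "\<dots> = g ^^ Suc k \<circ> t" by (simp add: o_assoc)
  finally show ?case .
qed



lemma key_form:
  assumes n: "n > 0" and d: "d > 0" "d dvd n"
    and tp: "\<tau> permutes {..<n}" and tc: "\<tau> \<circ> (std_cycle n ^^ d) = (std_cycle n ^^ d) \<circ> \<tau>"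
    and i: "i < n"
  shows "\<tau> i = (\<tau> (i mod d) + d*(i div d)) mod n"
proof -
  let ?j = "i div d"
  have c: "\<tau> \<circ> (std_cycle n ^^ d) ^^ ?j = (std_cycle n ^^ d) ^^ ?j \<circ> \<tau>"
    by (rule comm_pow[OF tc])
  have e: "(std_cycle n ^^ d) ^^ ?j = (\<lambda>i. if i < n then (i + d * ?j) mod n else i)"
    by (subst funpow_mult) (rule cyc_pow[OF n])
  have dn: "d \<le> n" using d n by (simp add: dvd_imp_le)
  have r: "i mod d < n" using d dn by (meson less_le_trans mod_less_divisor)
  have ri: "(i mod d + d * ?j) mod n = i" using i by simp
  have tr: "\<tau> (i mod d) < n" using permutes_in_image[OF tp, of "i mod d"] r by simp
  have "\<tau> i = \<tau> (((std_cycle n ^^ d) ^^ ?j) (i mod d))" using e r ri by simp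
  also have "\<dots> = ((std_cycle n ^^ d) ^^ ?j) (\<tau> (i mod d))" using c by (metis comp_apply)
  also have "\<dots> = (\<tau> (i mod d) + d*?j) mod n" using e tr by simp
  finally show ?thesis .
qed

definition Psi :: "nat \<Rightarrow> nat \<Rightarrow> nat \<Rightarrow> (nat \<Rightarrow> nat) \<times> (nat \<Rightarrow> nat) \<Rightarrow> nat \<Rightarrow> nat" where
  "Psi n d m ps = (\<lambda>i. if i < n then fst ps (i mod d) + d*((snd ps (i mod d) + i div d) mod m) else i)"

definition Phi :: "nat \<Rightarrow> (nat \<Rightarrow> nat) \<Rightarrow> (nat \<Rightarrow> nat) \<times> (nat \<Rightarrow> nat)" where
  "Phi d t = (restrict (\<lambda>r. t r mod d) {..<d}, restrict (\<lambda>r. t r div d) {..<d})"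

lemma psi_props:
  assumes d: "d > 0" and nm: "n = d*m" and ps: "(p,s) \<in> Hs m {..<d}" and i: "i < n"
  shows "Psi n d m (p,s) i < n" "Psi n d m (p,s) i mod d = p (i mod d)"
    "Psi n d m (p,s) i div d = (s (i mod d) + i div d) mod m"
proof -
  have m: "m > 0" using nm i by (cases m) auto
  have pr: "p (i mod d) < d" using ps d by (auto simp: Hs_def PiE_iff)
  have e: "Psi n d m (p,s) i = p (i mod d) + d*((s (i mod d) + i div d) mod m)"
    using i by (simp add: Psi_def)
  show "Psi n d m (p,s) i < n" unfolding e
    using small_bound[of "p (i mod d)" d "(s (i mod d) + i div d) mod m" m] pr m nm by simp
  show "Psi n d m (p,s) i mod d = p (i mod d)" unfolding e using pr by simp
  show "Psi n d m (p,s) i div d = (s (i mod d) + i div d) mod m" unfolding e using pr by simp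
qed

lemma I_bij:
  assumes n: "n > 0" and d: "d > 0" and nm: "n = d*m"
  shows "bij_betw (Phi d) {\<tau>. \<tau> permutes {..<n} \<and> \<tau> \<circ> \<tau> = id \<and>
                        \<tau> \<circ> (std_cycle n ^^ d) = (std_cycle n ^^ d) \<circ> \<tau>} (Hs m {..<d})"
proof (rule bij_betw_byWitness[where f' = "Psi n d m"])
  have m: "m > 0" using nm n by (cases m) auto
  have dvd: "d dvd n" using nm by simp
  have dn: "d \<le> n" using nm m by simp
  have sig: "std_cycle n ^^ d = (\<lambda>i. if i < n then (i + d) mod n else i)" by (rule cyc_pow[OF n])
  show "\<forall>t\<in>{\<tau>. \<tau> permutes {..<n} \<and> \<tau> \<circ> \<tau> = id \<and>
                        \<tau> \<circ> (std_cycle n ^^ d) = (std_cycle n ^^ d) \<circ> \<tau>}. Psi n d m (Phi d t) = t"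
  proof
    fix t assume "t \<in> {\<tau>. \<tau> permutes {..<n} \<and> \<tau> \<circ> \<tau> = id \<and>
                        \<tau> \<circ> (std_cycle n ^^ d) = (std_cycle n ^^ d) \<circ> \<tau>}"
    then have tp: "t permutes {..<n}" and tc: "t \<circ> (std_cycle n ^^ d) = (std_cycle n ^^ d) \<circ> t" by auto
    show "Psi n d m (Phi d t) = t"
    proof
      fix i show "Psi n d m (Phi d t) i = t i"
      proof (cases "i < n")
        case True
        have "t i = (t (i mod d) + d*(i div d)) mod n" by (rule key_form[OF n d dvd tp tc True])
        also have "\<dots> = t (i mod d) mod d + d*((t (i mod d) div d + i div d) mod m)"
          unfolding nm by (rule AR[OF d])
        finally show ?thesis using True d by (simp add: Psi_def Phi_def)
      next
        case False
        then show ?thesis using tp by (simp add: Psi_def permutes_def)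
      qed
    qed
  qed
  show "\<forall>x\<in>Hs m {..<d}. Phi d (Psi n d m x) = x"
  proof
    fix x assume x: "x \<in> Hs m {..<d}"
    obtain p s where ps: "x = (p,s)" by (cases x)
    have pA: "p \<in> {..<d} \<rightarrow>\<^sub>E {..<d}" and sA: "s \<in> {..<d} \<rightarrow>\<^sub>E {..<m}" using x ps by (auto simp: Hs_def)
    have 1: "restrict (\<lambda>r. Psi n d m (p,s) r mod d) {..<d} = p"
    proof
      fix r show "restrict (\<lambda>r. Psi n d m (p,s) r mod d) {..<d} r = p r"
      proof (cases "r < d")
        case True
        then have "r < n" using dn by simp
        then show ?thesis using psi_props(2)[OF d nm x[unfolded ps] \<open>r < n\<close>] True by simp
      next
        case False then show ?thesis using pA by (auto simp: PiE_iff extensional_def)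
      qed
    qed
    have 2: "restrict (\<lambda>r. Psi n d m (p,s) r div d) {..<d} = s"
    proof
      fix r show "restrict (\<lambda>r. Psi n d m (p,s) r div d) {..<d} r = s r"
      proof (cases "r < d")
        case True
        then have "r < n" using dn by simp
        moreover have "s r < m" using sA True by auto
        ultimately show ?thesis using psi_props(3)[OF d nm x[unfolded ps] \<open>r < n\<close>] True by simp
      next
        case False then show ?thesis using sA by (auto simp: PiE_iff extensional_def)
      qed
    qed
    show "Phi d (Psi n d m x) = x" unfolding ps Phi_def using 1 2 by simp
  qed
  show "Phi d ` {\<tau>. \<tau> permutes {..<n} \<and> \<tau> \<circ> \<tau> = id \<and>
                        \<tau> \<circ> (std_cycle n ^^ d) = (std_cycle n ^^ d) \<circ> \<tau>} \<subseteq> Hs m {..<d}"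
  proof
    fix y assume "y \<in> Phi d ` {\<tau>. \<tau> permutes {..<n} \<and> \<tau> \<circ> \<tau> = id \<and>
                        \<tau> \<circ> (std_cycle n ^^ d) = (std_cycle n ^^ d) \<circ> \<tau>}"
    then obtain t where y: "y = Phi d t" and tp: "t permutes {..<n}" and ti: "t \<circ> t = id"
      and tc: "t \<circ> (std_cycle n ^^ d) = (std_cycle n ^^ d) \<circ> t" by auto
    have tlt: "t r < n" if "r < n" for r using permutes_in_image[OF tp, of r] that by simp
    have 1: "restrict (\<lambda>r. t r mod d) {..<d} \<in> {..<d} \<rightarrow>\<^sub>E {..<d}" using d by auto
    have 2: "restrict (\<lambda>r. t r div d) {..<d} \<in> {..<d} \<rightarrow>\<^sub>E {..<m}"
    proof
      fix r assume "r \<in> {..<d}"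
      then have "r < n" using dn by simp
      then have "t r < d*m" using tlt nm by simp
      then show "restrict (\<lambda>r. t r div d) {..<d} r \<in> {..<m}" using \<open>r \<in> {..<d}\<close>
        by (simp add: less_mult_imp_div_less mult.commute)
    qed auto
    have 3: "(t (t r mod d) mod d) = r \<and> ((t (t r mod d) div d) + t r div d) mod m = 0" if r: "r < d" for r
    proof -
      have rn: "r < n" using r dn by simp
      have trn: "t r < n" using tlt rn .
      have "r = t (t r)" using ti by (metis comp_apply id_apply)
      also have "\<dots> = (t (t r mod d) + d*(t r div d)) mod n" by (rule key_form[OF n d dvd tp tc trn])
      also have "\<dots> = t (t r mod d) mod d + d*((t (t r mod d) div d + t r div d) mod m)"
        unfolding nm by (rule AR[OF d])
      finally have eq: "r = t (t r mod d) mod d + d*((t (t r mod d) div d + t r div d) mod m)" .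
      have "t (t r mod d) mod d < d" using d by simp
      then have "((t (t r mod d) div d + t r div d) mod m) = 0"
        using eq r by (metis add_lessD1 le_add2 mult_eq_0_iff not_less nat_mult_le_cancel_disj
             add.commute le_less_trans mult_le_mono2 nat_mult_1_right neq0_conv less_one)
      then show ?thesis using eq by simp
    qed
    show "y \<in> Hs m {..<d}" unfolding y Phi_def Hs_def using 1 2 3 d by auto
  qed
  show "Psi n d m ` Hs m {..<d} \<subseteq> {\<tau>. \<tau> permutes {..<n} \<and> \<tau> \<circ> \<tau> = id \<and>
                        \<tau> \<circ> (std_cycle n ^^ d) = (std_cycle n ^^ d) \<circ> \<tau>}"
  proof
    fix y assume "y \<in> Psi n d m ` Hs m {..<d}"
    then obtain p s where x: "(p,s) \<in> Hs m {..<d}" and y: "y = Psi n d m (p,s)" by auto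
    have pA: "p \<in> {..<d} \<rightarrow>\<^sub>E {..<d}" and sA: "s \<in> {..<d} \<rightarrow>\<^sub>E {..<m}"
      and inv: "\<forall>r\<in>{..<d}. p (p r) = r \<and> (s (p r) + s r) mod m = 0" using x by (auto simp: Hs_def)
    have out: "y i = i" if "\<not> i < n" for i using that by (simp add: y Psi_def)
    have inv2: "y (y i) = i" for i
    proof (cases "i < n")
      case True
      let ?r = "i mod d" and ?j = "i div d"
      have r: "?r < d" using d by simp
      have j: "?j < m" using True nm by (simp add: less_mult_imp_div_less mult.commute)
      have yi: "y i < n" using psi_props(1)[OF d nm x True] y by simp
      have "y (y i) = p (y i mod d) + d*((s (y i mod d) + y i div d) mod m)"
        using yi by (simp add: y Psi_def)
      also have "y i mod d = p ?r" using psi_props(2)[OF d nm x True] y by simp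
      also have "y i div d = (s ?r + ?j) mod m" using psi_props(3)[OF d nm x True] y by simp
      also have "(s (p ?r) + (s ?r + ?j) mod m) mod m = ((s (p ?r) + s ?r) mod m + ?j) mod m"
        by (simp add: mod_simps add.assoc)
      also have "\<dots> = ?j" using inv r j by simp
      also have "p (p ?r) = ?r" using inv r by simp
      finally show ?thesis by simp
    next
      case False then show ?thesis using out by simp
    qed
    have yid: "y \<circ> y = id" using inv2 by (simp add: fun_eq_iff)
    have yp: "y permutes {..<n}"
      unfolding permutes_def
    proof (intro conjI allI impI)
      fix x assume "x \<notin> {..<n}" then show "y x = x" using out by simp
    next
      fix z show "\<exists>!x. y x = z"
        by (rule ex1I[of _ "y z"]) (use inv2 in metis)+
    qed
    have yc: "y \<circ> (std_cycle n ^^ d) = (std_cycle n ^^ d) \<circ> y"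
    proof
      fix i show "(y \<circ> (std_cycle n ^^ d)) i = ((std_cycle n ^^ d) \<circ> y) i"
      proof (cases "i < n")
        case True
        let ?r = "i mod d" and ?j = "i div d"
        have r: "?r < d" using d by simp
        have i': "(i + d) mod n = ?r + d*((?j + 1) mod m)"
          using AR[OF d, of i 1 m] nm by simp
        have i'n: "(i + d) mod n < n" using n by simp
        have i'r: "(i + d) mod n mod d = ?r" "(i + d) mod n div d = (?j + 1) mod m"
          unfolding i' using r by simp_all
        have yi: "y i < n" using psi_props(1)[OF d nm x True] y by simp
        have lhs: "(y \<circ> (std_cycle n ^^ d)) i = p ?r + d*((s ?r + (?j+1) mod m) mod m)"
          using True i'n i'r by (simp add: sig y Psi_def)
        have "((std_cycle n ^^ d) \<circ> y) i = (y i + d) mod n" using yi by (simp add: sig)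
        also have "\<dots> = y i mod d + d*((y i div d + 1) mod m)"
          using AR[OF d, of "y i" 1 m] nm by simp
        also have "\<dots> = p ?r + d*(((s ?r + ?j) mod m + 1) mod m)"
          using psi_props(2,3)[OF d nm x True] y by simp
        also have "((s ?r + ?j) mod m + 1) mod m = (s ?r + (?j+1) mod m) mod m"
          by (simp add: mod_simps add.assoc)
        finally show ?thesis using lhs by simp
      next
        case False
        then show ?thesis using out by (simp add: sig)
      qed
    qed
    show "y \<in> {\<tau>. \<tau> permutes {..<n} \<and> \<tau> \<circ> \<tau> = id \<and>
                        \<tau> \<circ> (std_cycle n ^^ d) = (std_cycle n ^^ d) \<circ> \<tau>}"
      using yp yid yc by simp
  qed
qed



lemma part3:
  assumes n: "n > 0" and d: "d > 0" and dv: "d dvd n"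
  shows "real (I_nd n d) =
           (\<Sum>k = 0..d div 2. real (fact d) * real (n div d) ^ k
              * (2 - real (n div d mod 2)) ^ (d - 2 * k)
              / (2 ^ k * real (fact k) * real (fact (d - 2 * k))))"
proof -
  define m where "m = n div d"
  have nm: "n = d*m" using dv unfolding m_def by simp
  have m: "m > 0" using nm n by (cases m) auto
  have "I_nd n d = card (Hs m {..<d})"
    unfolding I_nd_def by (rule bij_betw_same_card[OF I_bij[OF n d nm]])
  also have "\<dots> = T (2 - m mod 2) m d" using Hs_card[of "{..<d}" m] m Cs_card[OF m] by simp
  finally have "real (I_nd n d) = real (T (2 - m mod 2) m d)" by simp
  also have "\<dots> = (\<Sum>k = 0..d div 2. real (fact d) * real m ^ k * real (2 - m mod 2) ^ (d - 2 * k)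
              / (2 ^ k * real (fact k) * real (fact (d - 2 * k))))" by (rule T_closed)
  also have "real (2 - m mod 2) = 2 - real (m mod 2)" by (simp add: of_nat_diff)
  finally show ?thesis unfolding m_def .
qed

lemma pow_eq: "n > 0 \<Longrightarrow> a mod n = b mod n \<Longrightarrow> std_cycle n ^^ a = std_cycle n ^^ b"
proof -
  assume n: "n > 0" and ab: "a mod n = b mod n"
  have "(i + a) mod n = (i + b) mod n" for i
  proof -
    have "(i + a) mod n = (i + a mod n) mod n" by (simp add: mod_add_right_eq)
    also have "\<dots> = (i + b mod n) mod n" using ab by simp
    also have "\<dots> = (i + b) mod n" by (simp add: mod_add_right_eq)
    finally show ?thesis .
  qed
  then show ?thesis by (simp add: cyc_pow[OF n] fun_eq_iff)
qed

lemma same_gen: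
  assumes "std_cycle n ^^ b = (std_cycle n ^^ a) ^^ k" "std_cycle n ^^ a = (std_cycle n ^^ b) ^^ l"
  shows "I_nd n a = I_nd n b"
proof -
  have "{\<tau>. \<tau> permutes {..<n} \<and> \<tau> \<circ> \<tau> = id \<and> \<tau> \<circ> (std_cycle n ^^ a) = (std_cycle n ^^ a) \<circ> \<tau>}
      = {\<tau>. \<tau> permutes {..<n} \<and> \<tau> \<circ> \<tau> = id \<and> \<tau> \<circ> (std_cycle n ^^ b) = (std_cycle n ^^ b) \<circ> \<tau>}"
  proof (rule Collect_cong)
    fix t
    have "t \<circ> (std_cycle n ^^ a) = (std_cycle n ^^ a) \<circ> t \<longleftrightarrow> t \<circ> (std_cycle n ^^ b) = (std_cycle n ^^ b) \<circ> t"
    proof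
      assume "t \<circ> (std_cycle n ^^ a) = (std_cycle n ^^ a) \<circ> t"
      from comm_pow[OF this, of k] show "t \<circ> (std_cycle n ^^ b) = (std_cycle n ^^ b) \<circ> t"
        unfolding assms(1) .
    next
      assume "t \<circ> (std_cycle n ^^ b) = (std_cycle n ^^ b) \<circ> t"
      from comm_pow[OF this, of l] show "t \<circ> (std_cycle n ^^ a) = (std_cycle n ^^ a) \<circ> t"
        unfolding assms(2) .
    qed
    then show "(t permutes {..<n} \<and> t \<circ> t = id \<and> t \<circ> (std_cycle n ^^ a) = (std_cycle n ^^ a) \<circ> t)
      = (t permutes {..<n} \<and> t \<circ> t = id \<and> t \<circ> (std_cycle n ^^ b) = (std_cycle n ^^ b) \<circ> t)" by simp
  qed
  then show ?thesis unfolding I_nd_def by simp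
qed

lemma part1:
  assumes n: "n > 0" and d: "d > 0" and e: "e > 0" and dv: "d dvd n" and cp: "coprime e (n div d)"
  shows "I_nd n (d * e) = I_nd n d"
proof -
  define m where "m = n div d"
  have nm: "n = d*m" using dv unfolding m_def by simp
  obtain l y where ly: "e * l = m * y + gcd e m" using bezout_nat[of e m] e by auto
  have g: "gcd e m = 1" using cp unfolding m_def by simp
  have "(d*e*l) mod n = d mod n"
  proof -
    have "d*e*l = n*y + d" using ly g nm by (simp add: algebra_simps)
    then show ?thesis by simp
  qed
  then have "std_cycle n ^^ d = (std_cycle n ^^ (d*e)) ^^ l"
    unfolding funpow_mult by (intro pow_eq[OF n]) simp
  moreover have "std_cycle n ^^ (d*e) = (std_cycle n ^^ d) ^^ e" by (simp add: funpow_mult)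
  ultimately show ?thesis by (intro same_gen[symmetric]) 
qed

lemma part2:
  assumes n: "n > 0" and f: "f > 0"
  shows "I_nd n f = I_nd n (gcd n f)"
proof -
  obtain x y where xy: "f * x = n * y + gcd f n" using bezout_nat[of f n] f by auto
  have "(f*x) mod n = gcd n f mod n" using xy by (simp add: gcd.commute)
  then have 1: "std_cycle n ^^ gcd n f = (std_cycle n ^^ f) ^^ x"
    unfolding funpow_mult by (intro pow_eq[OF n]) simp
  have "gcd n f * (f div gcd n f) = f" by simp
  then have 2: "std_cycle n ^^ f = (std_cycle n ^^ gcd n f) ^^ (f div gcd n f)"
    unfolding funpow_mult by simp
  show ?thesis by (rule same_gen[OF 1 2])
qed

theorem lemma6p2:
  fixes n d e f :: nat
  assumes "n > 0" "d > 0" "e > 0" "f > 0"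
    and "d dvd n" and "coprime e (n div d)"
  shows "I_nd n (d * e) = I_nd n d
    \<and> I_nd n f = I_nd n (gcd n f)
    \<and> real (I_nd n d) =
           (\<Sum>k = 0..d div 2. real (fact d) * real (n div d) ^ k
              * (2 - real (n div d mod 2)) ^ (d - 2 * k)
              / (2 ^ k * real (fact k) * real (fact (d - 2 * k))))
    \<and> real (I_n n) =
           (\<Sum>k = 0..n div 2. real (fact n) / (2 ^ k * real (fact k) * real (fact (n - 2 * k))))"
proof (intro conjI)
  show "I_nd n (d * e) = I_nd n d" using part1 assms by blast
  show "I_nd n f = I_nd n (gcd n f)" using part2 assms by blast
  show "real (I_nd n d) =
           (\<Sum>k = 0..d div 2. real (fact d) * real (n div d) ^ k
              * (2 - real (n div d mod 2)) ^ (d - 2 * k)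
              / (2 ^ k * real (fact k) * real (fact (d - 2 * k))))" using part3 assms by blast
  have "real (I_n n) = (\<Sum>k = 0..n div 2. real (fact n) * real (n div n) ^ k
              * (2 - real (n div n mod 2)) ^ (n - 2 * k)
              / (2 ^ k * real (fact k) * real (fact (n - 2 * k))))"
    unfolding I_n_def using part3[of n n] assms by simp
  also have "\<dots> = (\<Sum>k = 0..n div 2. real (fact n) / (2 ^ k * real (fact k) * real (fact (n - 2 * k))))"
    using assms by simp
  finally show "real (I_n n) =
           (\<Sum>k = 0..n div 2. real (fact n) / (2 ^ k * real (fact k) * real (fact (n - 2 * k))))" .
qed

end
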